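(* For every integer $n>1$, the series $\sum_{k=1}^\infty c^*_n(k)/k$ converges, and $$\log\Phi^*_n(1)=\Lambda^*(n)=-\sum_{k=1}^\infty\frac{c^*_n(k)}{k}.$$
   Context: $\zeta_n=e^{2\pi i/n}$. $d\mid\mid n$ means $d\mid n$ and $\gcd(d,n/d)=1$; $(j,n)_*=\max\{d: d\mid j,\ d\mid\mid n\}$; $\Phi^*_n(x)=\prod_{1\le j\le n,\ (j,n)_*=1}(x-\zeta_n^j)$; $c^*_n(k)=\sum_{1\le j\le n,\ (j,n)_*=1}\zeta_n^{jk}$ is the unitary Ramanujan sum. $\Lambda^*(n)=a\log p$ if $n=p^a$ is a prime power ($a\ge1$), and $0$ otherwise. *)

theory Defs
  imports "HOL-Analysis.Analysis" "HOL-Computational_Algebra.Computational_Algebra"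
begin

definition zeta :: "nat \<Rightarrow> complex" where
  "zeta n = exp (2 * of_real pi * \<i> / of_nat n)"

definition unitary_dvd :: "nat \<Rightarrow> nat \<Rightarrow> bool" where
  "unitary_dvd d n \<longleftrightarrow> d dvd n \<and> coprime d (n div d)"

definition ugcd :: "nat \<Rightarrow> nat \<Rightarrow> nat" where
  "ugcd j n = Max {d. d dvd j \<and> unitary_dvd d n}"

definition unitary_cyclotomic :: "nat \<Rightarrow> complex poly" where
  "unitary_cyclotomic n = (\<Prod>j\<in>{j\<in>{1..n}. ugcd j n = 1}. [:- (zeta n ^ j), 1:])"

definition unitary_ramanujan :: "nat \<Rightarrow> nat \<Rightarrow> complex" where
  "unitary_ramanujan n k = (\<Sum>j\<in>{j\<in>{1..n}. ugcd j n = 1}. zeta n ^ (j * k))"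

definition Lambda_star :: "nat \<Rightarrow> real" where
  "Lambda_star n = (if \<exists>p a. prime p \<and> a \<ge> 1 \<and> n = p ^ a
     then (THE x. \<exists>p a. prime p \<and> a \<ge> 1 \<and> n = p ^ a \<and> x = real a * ln (real p))
     else 0)"

end

theory Submission
  imports Defs "HOL-Complex_Analysis.Complex_Analysis"
begin

lemma re_lt1: fixes z::complex assumes "norm z = 1" "z \<noteq> 1" shows "Re z < 1"
proof (rule ccontr)
  assume "\<not> Re z < 1"
  moreover have "Re z \<le> 1" using complex_Re_le_cmod[of z] assms by simp
  ultimately have r: "Re z = 1" by simp
  have "(Re z)^2 + (Im z)^2 = 1" using assms(1) by (simp add: cmod_def)
  with r have "Im z = 0" by simp
  with r have "z = 1" by (simp add: complex_eq_iff)
  with assms show False by simp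
qed

lemma seg_re_pos: fixes z::complex assumes "norm z = 1" "z \<noteq> 1" "0 \<le> t" "t \<le> 1"
  shows "Re (1 - of_real t * z) > 0"
proof -
  have "Re z < 1" using re_lt1 assms by blast
  hence "t * Re z < 1"
  proof (cases "Re z \<le> 0")
    case True thus ?thesis using mult_nonneg_nonpos[of t "Re z"] assms by linarith
  next
    case False thus ?thesis using mult_left_le_one_le[of "Re z" t] assms \<open>Re z < 1\<close> by linarith
  qed
  thus ?thesis by simp
qed

lemma deriv_pow_div: "((\<lambda>v::complex. v ^ Suc k / of_nat (Suc k)) has_field_derivative u ^ k) (at u)"
proof -
  have c: "(of_nat (Suc k)::complex) \<noteq> 0" by (metis of_nat_eq_0_iff nat.distinct(1))
  show ?thesis
    apply (rule DERIV_cong[OF DERIV_cdivide[OF DERIV_power[OF DERIV_ident]]])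
    using c by simp
qed

lemma deriv_real_pow_div: assumes "d \<noteq> 0"
  shows "((\<lambda>v::real. v ^ Suc k / (real (Suc k) * d)) has_real_derivative u ^ k / d) (at u)"
proof -
  have c: "real (Suc k) \<noteq> 0" by simp
  show ?thesis
    apply (rule DERIV_cong[OF DERIV_cdivide[OF DERIV_power[OF DERIV_ident]]])
    using c assms by (simp del: of_nat_Suc)
qed

lemma log_boundary:
  fixes z :: complex
  assumes z1: "norm z = 1" and zn: "z \<noteq> 1"
  shows "(\<lambda>k. z ^ Suc k / of_nat (Suc k)) sums (- Ln (1 - z))"
proof -
  have pos: "Re (1 - of_real t * z) > 0" if "t \<in> {0..1}" for t
    using seg_re_pos[OF z1 zn] that by auto
  have cont: "continuous_on {0..1} (\<lambda>t::real. norm (1 - of_real t * z))"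
    by (intro continuous_intros)
  obtain t0 where t0: "t0 \<in> {0..1::real}" "\<And>t. t \<in> {0..1} \<Longrightarrow> norm (1 - of_real t0 * z) \<le> norm (1 - of_real t * z)"
    using continuous_attains_inf[OF compact_Icc _ cont] by auto
  define \<delta> where "\<delta> = norm (1 - of_real t0 * z)"
  have \<delta>pos: "\<delta> > 0"
  proof -
    have "1 - of_real t0 * z \<noteq> 0" using pos[OF t0(1)] by (metis zero_complex.sel(1) less_irrefl)
    thus ?thesis unfolding \<delta>_def by simp
  qed
  have \<delta>le: "\<delta> \<le> norm (1 - of_real t * z)" if "t \<in> {0..1}" for t using t0(2)[OF that] \<delta>_def by simp
  have seg: "u \<in> closed_segment 0 z \<Longrightarrow> \<exists>t\<in>{0..1}. u = of_real t * z" for u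
    by (auto simp: closed_segment_def scaleR_conv_of_real)
  have bound: "norm ((\<Sum>k<N. z ^ Suc k / of_nat (Suc k)) + Ln (1 - z)) \<le> inverse (real (Suc N)) / \<delta>" for N
  proof -
    define H where "H u = (\<Sum>k<N. u ^ Suc k / of_nat (Suc k)) + Ln (1 - u)" for u :: complex
    define H' where "H' u = - (u ^ N / (1 - u))" for u :: complex
    have der: "(H has_field_derivative H' u) (at u within closed_segment 0 z)" if uS: "u \<in> closed_segment 0 z" for u
    proof -
      obtain t where t: "t \<in> {0..1}" "u = of_real t * z" using seg[OF uS] by blast
      have re: "Re (1 - u) > 0" using pos[OF t(1)] t by simp
      hence nr: "1 - u \<notin> \<real>\<^sub>\<le>\<^sub>0" by (auto simp: complex_nonpos_Reals_iff)
      have u1: "u \<noteq> 1" using re by auto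
      have d: "(H has_field_derivative ((\<Sum>k<N. u ^ k) + inverse (1 - u) * (-1))) (at u)"
      proof -
        have lnd: "((\<lambda>v. Ln (1 - v)) has_field_derivative (inverse (1 - u) * (-1))) (at u)"
          by (rule DERIV_chain2[where f=Ln and g="\<lambda>v. 1 - v" and Da="inverse (1-u)"])
             (auto intro!: has_field_derivative_Ln nr derivative_eq_intros)
        have sd: "((\<lambda>v. \<Sum>k<N. v ^ Suc k / of_nat (Suc k)) has_field_derivative (\<Sum>k<N. u ^ k)) (at u)"
        proof (rule DERIV_sum)
          fix k
          show "((\<lambda>v. v ^ Suc k / of_nat (Suc k)) has_field_derivative u ^ k) (at u)"
            by (rule deriv_pow_div)
        qed
        show ?thesis unfolding H_def by (rule DERIV_add[OF sd lnd])
      qed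
      have "(\<Sum>k<N. u ^ k) + inverse (1 - u) * (-1) = H' u"
      proof -
        have e: "(1 - u) * (\<Sum>k<N. u ^ k) = 1 - u ^ N" by (simp add: one_diff_power_eq)
        have u1': "1 - u \<noteq> 0" using u1 by simp
        have "(\<Sum>k<N. u ^ k) + inverse (1 - u) * (-1) = ((1 - u) * (\<Sum>k<N. u ^ k) - 1) / (1 - u)"
          using u1' by (simp add: field_simps)
        also have "\<dots> = - (u ^ N / (1 - u))" unfolding e by (simp add: field_simps)
        finally show ?thesis unfolding H'_def .
      qed
      with d show ?thesis by (metis has_field_derivative_at_within)
    qed
    have ci: "(H' has_contour_integral (H z - H 0)) (linepath 0 z)"
      using contour_integral_primitive[OF der, of "linepath 0 z"] by simp
    hence hi: "((\<lambda>x. H' (linepath 0 z x) * z) has_integral (H z - H 0)) {0..1}"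
      by (simp add: has_contour_integral_linepath)
    have H0: "H 0 = 0" unfolding H_def by simp
    have gi: "((\<lambda>x::real. x ^ N / \<delta>) has_integral (inverse (real (Suc N)) / \<delta>)) {0..1}"
    proof -
      have "((\<lambda>x::real. x ^ N / \<delta>) has_integral (1 ^ Suc N / (real (Suc N) * \<delta>) - 0 ^ Suc N / (real (Suc N) * \<delta>))) {0..1}"
        apply (rule fundamental_theorem_of_calculus)
         apply simp
        apply (subst has_real_derivative_iff_has_vector_derivative[symmetric])
        apply (rule has_field_derivative_at_within)
        using \<delta>pos by (intro deriv_real_pow_div) simp
      thus ?thesis by (simp add: field_simps)
    qed
    have "norm (integral {0..1} (\<lambda>x. H' (linepath 0 z x) * z)) \<le> integral {0..1} (\<lambda>x::real. x ^ N / \<delta>)"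
    proof (rule integral_norm_bound_integral)
      show "(\<lambda>x. H' (linepath 0 z x) * z) integrable_on {0..1}" using hi by blast
      show "(\<lambda>x::real. x ^ N / \<delta>) integrable_on {0..1}" using gi by blast
      fix x :: real assume x: "x \<in> {0..1}"
      have lp: "linepath 0 z x = of_real x * z" by (simp add: linepath_def scaleR_conv_of_real)
      have "norm (H' (linepath 0 z x) * z) = x ^ N / norm (1 - of_real x * z)"
        using x z1 by (simp add: lp H'_def norm_mult norm_divide norm_power scaleR_conv_of_real)
      also have "\<dots> \<le> x ^ N / \<delta>"
        using x \<delta>le[OF x] \<delta>pos by (intro divide_left_mono) (auto intro: mult_pos_pos less_le_trans[OF \<delta>pos])
      finally show "norm (H' (linepath 0 z x) * z) \<le> x ^ N / \<delta>" .
    qed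
    hence "norm (H z) \<le> inverse (real (Suc N)) / \<delta>"
      using integral_unique[OF hi] integral_unique[OF gi] H0 \<delta>pos by simp
    thus ?thesis unfolding H_def .
  qed
  have "(\<lambda>N. (\<Sum>k<N. z ^ Suc k / of_nat (Suc k)) + Ln (1 - z)) \<longlonglongrightarrow> 0"
  proof (rule Lim_null_comparison)
    show "\<forall>\<^sub>F N in sequentially. norm ((\<Sum>k<N. z ^ Suc k / of_nat (Suc k)) + Ln (1 - z)) \<le> inverse (real (Suc N)) / \<delta>"
      using bound by simp
    show "(\<lambda>N. inverse (real (Suc N)) / \<delta>) \<longlonglongrightarrow> 0"
      by (intro tendsto_divide_zero LIMSEQ_inverse_real_of_nat)
  qed
  hence "(\<lambda>N. ((\<Sum>k<N. z ^ Suc k / of_nat (Suc k)) + Ln (1 - z)) - Ln (1 - z)) \<longlonglongrightarrow> 0 - Ln (1 - z)"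
    by (intro tendsto_diff tendsto_const)
  thus ?thesis unfolding sums_def by simp
qed

lemma zeta_pow: "m > 0 \<Longrightarrow> zeta m ^ j = exp (2 * of_real pi * \<i> * of_nat j / of_nat m)"
  unfolding zeta_def by (simp add: exp_of_nat_mult[symmetric] mult_ac)

lemma zeta_pow_eq1: "m > 0 \<Longrightarrow> zeta m ^ j = 1 \<longleftrightarrow> m dvd j"
  using complex_root_unity_eq_1[of m j] by (simp add: zeta_pow)

lemma zeta_pow_inj: "m > 0 \<Longrightarrow> zeta m ^ i = zeta m ^ j \<longleftrightarrow> i mod m = j mod m"
  using complex_root_unity_eq[of m i j] by (simp add: zeta_pow)

lemma norm_zeta_pow: "m > 0 \<Longrightarrow> norm (zeta m ^ j) = 1"
  unfolding zeta_def by (simp add: norm_power)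

lemma zeta_pow_mult: assumes "b > 0" "b dvd n" "n > 0"
  shows "zeta n ^ (b * i) = zeta (n div b) ^ i"
proof -
  obtain c where c: "n = b * c" using assms by blast
  with assms have cpos: "c > 0" by simp
  have nb: "n div b = c" using c assms by simp
  have "zeta n ^ (b * i) = exp (2 * of_real pi * \<i> * of_nat (b * i) / of_nat n)"
    by (rule zeta_pow[OF assms(3)])
  also have "\<dots> = exp (2 * of_real pi * \<i> * of_nat i / of_nat c)"
    using assms cpos unfolding c by (simp add: field_simps)
  also have "\<dots> = zeta (n div b) ^ i" unfolding nb by (rule zeta_pow[OF cpos, symmetric])
  finally show ?thesis .
qed

lemma prod_roots_unity:
  assumes m: "m > 0"
  shows "(\<Prod>j\<in>{1..<m}. (1 - zeta m ^ j)) = of_nat m"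
proof -
  define p where "p = (\<Prod>j<m. [:- (zeta m ^ j), 1:])"
  define q :: "complex poly" where "q = monom 1 m - 1"
  define R where "R = (\<Prod>j\<in>{1..<m}. [:- (zeta m ^ j), 1:])"
  define T :: "complex poly" where "T = (\<Sum>i<m. monom 1 i)"
  have degp: "degree p = m" unfolding p_def
    by (subst degree_prod_eq_sum_degree) auto
  have lcp: "lead_coeff p = 1" unfolding p_def lead_coeff_prod by simp
  have degq: "degree q \<le> m" unfolding q_def
    by (intro degree_diff_le) (auto simp: degree_monom_le)
  have cq: "coeff q m = 1" unfolding q_def using m by simp
  define A where "A = (\<lambda>j. zeta m ^ j) ` {..<m}"
  have cardA: "card A = m" unfolding A_def
    by (subst card_image) (auto simp: inj_on_def zeta_pow_inj[OF m])
  have "p = q"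
  proof (rule poly_eqI_degree_lead_coeff[of p m q A])
    show "coeff p m = coeff q m" using lcp degp cq by simp
    fix x assume "x \<in> A"
    then obtain j where j: "j < m" "x = zeta m ^ j" unfolding A_def by blast
    have "poly p x = 0" unfolding p_def poly_prod using j by (auto intro!: prod_zero)
    moreover have "poly q x = 0"
    proof -
      have "(zeta m ^ j) ^ m = (zeta m ^ m) ^ j" by (metis power_mult mult.commute)
      also have "zeta m ^ m = 1" using zeta_pow_eq1[OF m] by simp
      finally show ?thesis using j by (simp add: q_def poly_monom)
    qed
    ultimately show "poly p x = poly q x" by simp
  qed (use cardA degp degq in auto)
  moreover have "p = [:-1, 1:] * R"
  proof -
    have "{..<m} = insert 0 {1..<m}" using m by auto
    thus ?thesis unfolding p_def R_def by simp
  qed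
  moreover have "q = [:-1, 1:] * T"
  proof -
    have "poly q x = poly ([:-1, 1:] * T) x" for x
      unfolding q_def T_def by (simp add: poly_monom poly_sum power_diff_1_eq algebra_simps)
    hence "poly q = poly ([:-1, 1:] * T)" by blast
    thus ?thesis by (simp add: poly_eq_poly_eq_iff)
  qed
  ultimately have e: "[:-1, 1:] * R = [:-1, 1:] * T" by metis
  have nz: "[:-1, 1:] \<noteq> (0::complex poly)" by simp
  have "R = T" using e nz by (metis mult_cancel_left)
  hence "poly R 1 = poly T 1" by simp
  thus ?thesis unfolding R_def T_def by (simp add: poly_prod poly_sum poly_monom)
qed

definition PB :: "nat set \<Rightarrow> nat \<Rightarrow> complex" where
  "PB B m = (\<Prod>j\<in>{j. 1 \<le> j \<and> j < m \<and> (\<forall>b\<in>B. \<not> b dvd j)}. (1 - zeta m ^ j))"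

lemma PB_empty: "m > 0 \<Longrightarrow> PB {} m = of_nat m"
proof -
  assume m: "m > 0"
  have "{j. 1 \<le> j \<and> j < m \<and> (\<forall>b\<in>{}. \<not> b dvd j)} = {1..<m}" by auto
  thus ?thesis unfolding PB_def using prod_roots_unity[OF m] by simp
qed

lemma PB_step:
  assumes b: "b > 0" "b dvd n" and n: "n > 0" and cop: "\<forall>c\<in>B. coprime c b"
  shows "PB B n = PB (insert b B) n * PB B (n div b)"
proof -
  define X where "X = {j. 1 \<le> j \<and> j < n \<and> (\<forall>c\<in>B. \<not> c dvd j)}"
  define X1 where "X1 = {j. 1 \<le> j \<and> j < n \<and> (\<forall>c\<in>insert b B. \<not> c dvd j)}"
  define X2 where "X2 = {j\<in>X. b dvd j}"
  define Y where "Y = {i. 1 \<le> i \<and> i < n div b \<and> (\<forall>c\<in>B. \<not> c dvd i)}"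
  obtain k where k: "n = b * k" using b by blast
  have nk: "n div b = k" using k b by simp
  have XU: "X = X1 \<union> X2" unfolding X_def X1_def X2_def by auto
  have dis: "X1 \<inter> X2 = {}" unfolding X1_def X2_def by auto
  have fin: "finite X1" "finite X2" unfolding X1_def X2_def X_def by (auto intro: finite_subset[of _ "{..<n}"])
  have img: "X2 = (\<lambda>i. b * i) ` Y"
  proof (intro equalityI subsetI)
    fix j assume "j \<in> X2"
    then obtain i where i: "j = b * i" and j: "1 \<le> j" "j < n" "\<forall>c\<in>B. \<not> c dvd j"
      unfolding X2_def X_def by blast
    have "1 \<le> i" using j(1) i by (cases i) auto
    moreover have "i < n div b" using j(2) i k nk b by simp
    moreover have "\<forall>c\<in>B. \<not> c dvd i" using j(3) i by auto
    ultimately show "j \<in> (\<lambda>i. b * i) ` Y" unfolding Y_def using i by blast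
  next
    fix j assume "j \<in> (\<lambda>i. b * i) ` Y"
    then obtain i where i: "j = b * i" "1 \<le> i" "i < n div b" "\<forall>c\<in>B. \<not> c dvd i"
      unfolding Y_def by blast
    have "1 \<le> j" using i b by (simp add: Suc_le_eq)
    moreover have "j < n" using i k nk b by simp
    moreover have "\<forall>c\<in>B. \<not> c dvd j"
      using i cop by (auto simp: coprime_dvd_mult_right_iff)
    ultimately show "j \<in> X2" unfolding X2_def X_def using i by auto
  qed
  have "PB B n = (\<Prod>j\<in>X. (1 - zeta n ^ j))" unfolding PB_def X_def ..
  also have "\<dots> = (\<Prod>j\<in>X1. (1 - zeta n ^ j)) * (\<Prod>j\<in>X2. (1 - zeta n ^ j))"
    unfolding XU using fin dis by (rule prod.union_disjoint)
  also have "(\<Prod>j\<in>X1. (1 - zeta n ^ j)) = PB (insert b B) n" unfolding PB_def X1_def ..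
  also have "(\<Prod>j\<in>X2. (1 - zeta n ^ j)) = (\<Prod>i\<in>Y. (1 - zeta n ^ (b * i)))"
    unfolding img using b by (subst prod.reindex) (auto simp: inj_on_def)
  also have "\<dots> = (\<Prod>i\<in>Y. (1 - zeta (n div b) ^ i))"
    using zeta_pow_mult[OF b n] by simp
  also have "\<dots> = PB B (n div b)" unfolding PB_def Y_def ..
  finally show ?thesis .
qed

lemma PB_val:
  assumes "finite B"
  shows "\<forall>n. n > 0 \<and> (\<forall>b\<in>B. b > 1 \<and> b dvd n) \<and> (\<forall>b\<in>B. \<forall>c\<in>B. b \<noteq> c \<longrightarrow> coprime b c) \<longrightarrow>
    PB B n = of_nat (if B = {} then n else if card B = 1 then \<Prod>B else 1)"
  using assms
proof (induction B rule: finite_induct)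
  case empty
  then show ?case using PB_empty by auto
next
  case (insert b B)
  show ?case
  proof (intro allI impI)
    fix n assume H: "n > 0 \<and> (\<forall>x\<in>insert b B. x > 1 \<and> x dvd n) \<and>
       (\<forall>x\<in>insert b B. \<forall>c\<in>insert b B. x \<noteq> c \<longrightarrow> coprime x c)"
    have b: "b > 0" "b dvd n" "b > 1" using H by auto
    have n: "n > 0" using H by simp
    have cop: "\<forall>c\<in>B. coprime c b" using H insert.hyps(2) by (metis insertCI)
    obtain k where k: "n = b * k" using b by blast
    have nk: "n div b = k" using k b by simp
    have kpos: "k > 0" using n k by simp
    have B1: "\<forall>x\<in>B. x > 1 \<and> x dvd k"
    proof
      fix x assume x: "x \<in> B"
      have "x dvd b * k" using H x k by auto
      hence "x dvd k" using cop x coprime_dvd_mult_right_iff[of x b k] by simp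
      thus "x > 1 \<and> x dvd k" using H x by auto
    qed
    have B2: "\<forall>x\<in>B. \<forall>c\<in>B. x \<noteq> c \<longrightarrow> coprime x c" using H by auto
    have IHn: "PB B n = of_nat (if B = {} then n else if card B = 1 then \<Prod>B else 1)"
      using insert.IH H by auto
    have IHk: "PB B k = of_nat (if B = {} then k else if card B = 1 then \<Prod>B else 1)"
      using insert.IH kpos B1 B2 by auto
    have step: "PB B n = PB (insert b B) n * PB B k"
      using PB_step[OF b(1,2) n cop] nk by simp
    show "PB (insert b B) n = of_nat (if insert b B = {} then n else if card (insert b B) = 1 then \<Prod>(insert b B) else 1)"
    proof (cases "B = {}")
      case True
      have e1: "(of_nat n::complex) = PB (insert b B) n * of_nat k" using step IHn IHk True by simp
      have e2: "(of_nat n::complex) = of_nat b * of_nat k" using k by simp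
      have kz: "(of_nat k::complex) \<noteq> 0" using kpos by simp
      have "PB (insert b B) n = of_nat b" using e1 e2 kz by (metis mult_cancel_right)
      thus ?thesis using True by simp
    next
      case False
      show ?thesis
      proof (cases "card B = 1")
        case True
        then obtain t where t: "B = {t}" by (meson card_1_singletonE)
        have "t > 1" using B1 t by auto
        have "of_nat t = PB (insert b B) n * (of_nat t :: complex)"
          using step IHn IHk t by simp
        hence "PB (insert b B) n = 1" using \<open>t > 1\<close> by simp
        moreover have "card (insert b B) = 2" using t insert.hyps by auto
        ultimately show ?thesis by simp
      next
        case False2: False
        have "1 = PB (insert b B) n * (1 :: complex)"
          using step IHn IHk False False2 by simp
        moreover have "card (insert b B) \<noteq> 1" using False insert.hyps by (simp add: card_insert_if)
        ultimately show ?thesis by simp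
      qed
    qed
  qed
qed

definition QQ :: "nat \<Rightarrow> nat set" where
  "QQ n = (\<lambda>p. p ^ multiplicity p n) ` prime_factors n"

lemma mult_pos: assumes "p \<in> prime_factors n" shows "multiplicity p n > 0"
proof -
  have "prime p" "p dvd n" "n \<noteq> 0" using assms by (auto simp: in_prime_factors_iff)
  thus ?thesis using prime_elem_multiplicity_eq_zero_iff[of p n] by auto
qed

lemma QQ_inj: "inj_on (\<lambda>p. p ^ multiplicity p n) (prime_factors n)"
proof (rule inj_onI)
  fix p p' assume p: "p \<in> prime_factors n" "p' \<in> prime_factors n"
    and e: "p ^ multiplicity p n = p' ^ multiplicity p' n"
  have "prime p" "prime p'" using p by (auto simp: in_prime_factors_iff)
  thus "p = p'" using prime_power_inj'(1)[OF _ _ e mult_pos[OF p(1)] mult_pos[OF p(2)]] by blast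
qed

lemma QQ_props:
  assumes n: "n > 0"
  shows "finite (QQ n)" "\<forall>q\<in>QQ n. q > 1 \<and> q dvd n"
    "\<forall>q\<in>QQ n. \<forall>c\<in>QQ n. q \<noteq> c \<longrightarrow> coprime q c"
proof -
  show "finite (QQ n)" unfolding QQ_def by simp
  show "\<forall>q\<in>QQ n. q > 1 \<and> q dvd n"
  proof
    fix q assume "q \<in> QQ n"
    then obtain p where p: "p \<in> prime_factors n" "q = p ^ multiplicity p n" unfolding QQ_def by blast
    have "prime p" using p by (auto simp: in_prime_factors_iff)
    hence "p > 1" by (rule prime_gt_1_nat)
    hence "q > 1" using p(2) one_less_power[of p "multiplicity p n"] mult_pos[OF p(1)] by simp
    moreover have "q dvd n" using p multiplicity_dvd by simp
    ultimately show "q > 1 \<and> q dvd n" by simp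
  qed
  show "\<forall>q\<in>QQ n. \<forall>c\<in>QQ n. q \<noteq> c \<longrightarrow> coprime q c"
  proof (intro ballI impI)
    fix q c assume "q \<in> QQ n" "c \<in> QQ n" "q \<noteq> c"
    then obtain p p' where p: "p \<in> prime_factors n" "q = p ^ multiplicity p n"
      and p': "p' \<in> prime_factors n" "c = p' ^ multiplicity p' n" unfolding QQ_def by blast
    have "p \<noteq> p'" using p p' \<open>q \<noteq> c\<close> by auto
    moreover have "prime p" "prime p'" using p p' by (auto simp: in_prime_factors_iff)
    ultimately have "coprime p p'" by (rule primes_coprime[rotated 2])
    thus "coprime q c" using p p' by simp
  qed
qed

lemma QQ_unitary:
  assumes "q \<in> QQ n" "n > 0" shows "unitary_dvd q n"
proof -
  obtain p where p: "p \<in> prime_factors n" "q = p ^ multiplicity p n" using assms unfolding QQ_def by blast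
  have pr: "prime p" using p by (auto simp: in_prime_factors_iff)
  have "p \<noteq> 1" using pr by auto
  hence "\<not> p dvd (n div p ^ multiplicity p n)" using multiplicity_decompose[of n p] assms(2) by simp
  hence "coprime p (n div q)" using pr p by (simp add: prime_imp_coprime)
  hence "coprime q (n div q)" using p by simp
  thus ?thesis unfolding unitary_dvd_def using p multiplicity_dvd by simp
qed

lemma ugcd_char:
  assumes n: "n > 1" and j: "1 \<le> j"
  shows "ugcd j n = 1 \<longleftrightarrow> (\<forall>q\<in>QQ n. \<not> q dvd j)"
proof -
  define D where "D = {d. d dvd j \<and> unitary_dvd d n}"
  have "D \<subseteq> {..j}" unfolding D_def using j by (auto dest: dvd_imp_le)
  hence finD: "finite D" by (rule finite_subset) simp
  have oneD: "1 \<in> D" unfolding D_def unitary_dvd_def by simp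
  have UG: "ugcd j n = Max D" unfolding ugcd_def D_def ..
  have UG: "ugcd j n = Max D" unfolding ugcd_def D_def ..
  show ?thesis
  proof
    assume u: "ugcd j n = 1"
    show "\<forall>q\<in>QQ n. \<not> q dvd j"
    proof (intro ballI notI)
      fix q assume q: "q \<in> QQ n" "q dvd j"
      have "unitary_dvd q n" using QQ_unitary[OF q(1)] n by simp
      hence "q \<in> D" unfolding D_def using q(2) by simp
      hence "q \<le> Max D" using finD by simp
      moreover have "q > 1" using QQ_props(2)[of n] n q by auto
      ultimately show False using u UG by simp
    qed
  next
    assume H: "\<forall>q\<in>QQ n. \<not> q dvd j"
    have "\<forall>d\<in>D. d \<le> 1"
    proof (rule ccontr)
      assume "\<not> (\<forall>d\<in>D. d \<le> 1)"
      then obtain d where d: "d \<in> D" "d > 1" by (auto simp: not_le)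
      hence dd: "d dvd j" "d dvd n" "coprime d (n div d)" unfolding D_def unitary_dvd_def by auto
      have "d \<noteq> 1" using d by simp
      then obtain p where p: "prime p" "p dvd d" using prime_factor_nat[of d] by blast
      have "p dvd n" using p(2) dd(2) by (rule dvd_trans)
      hence pn: "p \<in> prime_factors n" using p n by (simp add: in_prime_factors_iff)
      define q where "q = p ^ multiplicity p n"
      have qQ: "q \<in> QQ n" unfolding QQ_def q_def using pn by blast
      have "coprime p (n div d)" using coprime_divisors[OF p(2) dvd_refl dd(3)] .
      hence cq: "coprime q (n div d)" unfolding q_def by simp
      have "q dvd d * (n div d)" using dd(2) multiplicity_dvd[of p n] unfolding q_def by simp
      hence "q dvd d" by (simp add: coprime_dvd_mult_left_iff[OF cq])
      hence "q dvd j" using dd(1) by (rule dvd_trans)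
      thus False using H qQ by blast
    qed
    moreover have "0 \<notin> D" unfolding D_def using j by auto
    ultimately have "D = {1}" using oneD
    proof (intro equalityI subsetI)
      fix d assume "d \<in> D"
      have "d \<le> 1" using \<open>d \<in> D\<close> \<open>\<forall>d\<in>D. d \<le> 1\<close> by blast
      moreover have "d \<noteq> 0" using \<open>d \<in> D\<close> \<open>0 \<notin> D\<close> by metis
      ultimately show "d \<in> {1}" by simp
    qed (use oneD in simp)
    thus "ugcd j n = 1" unfolding UG by simp
  qed
qed

lemma S_char:
  assumes n: "n > 1"
  shows "{j\<in>{1..n}. ugcd j n = 1} = {j. 1 \<le> j \<and> j < n \<and> (\<forall>q\<in>QQ n. \<not> q dvd j)}"
proof -
  obtain p where p: "prime p" "p dvd n" using n prime_factor_nat[of n] by auto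
  hence "p \<in> prime_factors n" using n by (simp add: in_prime_factors_iff)
  hence "prime_factors n \<noteq> {}" by blast
  hence "QQ n \<noteq> {}" unfolding QQ_def by simp
  then obtain q where q: "q \<in> QQ n" by blast
  have "q dvd n" using QQ_props(2)[of n] n q by auto
  hence nS: "\<not> (\<forall>q\<in>QQ n. \<not> q dvd n)" using q by blast
  show ?thesis
  proof (intro equalityI subsetI)
    fix j assume "j \<in> {j\<in>{1..n}. ugcd j n = 1}"
    hence j: "1 \<le> j" "j \<le> n" "ugcd j n = 1" by auto
    have a: "\<forall>q\<in>QQ n. \<not> q dvd j" using ugcd_char[OF n j(1)] j(3) by simp
    hence "j \<noteq> n" using nS by blast
    thus "j \<in> {j. 1 \<le> j \<and> j < n \<and> (\<forall>q\<in>QQ n. \<not> q dvd j)}" using j a by simp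
  next
    fix j assume "j \<in> {j. 1 \<le> j \<and> j < n \<and> (\<forall>q\<in>QQ n. \<not> q dvd j)}"
    thus "j \<in> {j\<in>{1..n}. ugcd j n = 1}" using ugcd_char[OF n] by auto
  qed
qed

lemma prod_QQ: assumes "n > 0" shows "\<Prod>(QQ n) = n"
proof -
  have "\<Prod>(QQ n) = (\<Prod>p\<in>prime_factors n. p ^ multiplicity p n)"
    unfolding QQ_def by (subst prod.reindex[OF QQ_inj]) simp
  also have "\<dots> = n" using prod_prime_factors[of n] assms by simp
  finally show ?thesis .
qed

lemma card_QQ: "card (QQ n) = card (prime_factors n)"
  unfolding QQ_def by (rule card_image[OF QQ_inj])

definition VV :: "nat \<Rightarrow> nat" where
  "VV n = (if card (prime_factors n) = 1 then n else 1)"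

lemma poly_value:
  assumes n: "n > 1"
  shows "poly (unitary_cyclotomic n) 1 = of_nat (VV n)"
proof -
  have "poly (unitary_cyclotomic n) 1 = (\<Prod>j\<in>{j\<in>{1..n}. ugcd j n = 1}. (1 - zeta n ^ j))"
    unfolding unitary_cyclotomic_def by (simp add: poly_prod)
  also have "\<dots> = PB (QQ n) n" unfolding S_char[OF n] PB_def ..
  also have "\<dots> = of_nat (if QQ n = {} then n else if card (QQ n) = 1 then \<Prod>(QQ n) else 1)"
    using PB_val[OF QQ_props(1)[of n]] QQ_props[of n] n by auto
  also have "\<dots> = of_nat (VV n)"
    unfolding VV_def card_QQ using prod_QQ[of n] n by auto
  finally show ?thesis .
qed

lemma Lambda_value:
  assumes n: "n > 1"
  shows "Lambda_star n = ln (real (VV n))"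
proof (cases "\<exists>p a. prime p \<and> a \<ge> 1 \<and> n = p ^ a")
  case True
  then obtain p a where pa: "prime p" "a \<ge> 1" "n = p ^ a" by blast
  have "(THE x. \<exists>p a. prime p \<and> a \<ge> 1 \<and> n = p ^ a \<and> x = real a * ln (real p)) = real a * ln (real p)"
  proof (rule the_equality)
    show "\<exists>p' a'. prime p' \<and> a' \<ge> 1 \<and> n = p' ^ a' \<and> real a * ln (real p) = real a' * ln (real p')"
      using pa by blast
    fix x assume "\<exists>p' a'. prime p' \<and> a' \<ge> 1 \<and> n = p' ^ a' \<and> x = real a' * ln (real p')"
    then obtain p' a' where pa': "prime p'" "a' \<ge> 1" "n = p' ^ a'" "x = real a' * ln (real p')" by blast
    have "p' ^ a' = p ^ a" using pa pa' by simp
    hence "p' = p" "a' = a" using prime_power_inj'[OF pa'(1) pa(1)] pa pa' by auto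
    thus "x = real a * ln (real p)" using pa' by simp
  qed
  hence L: "Lambda_star n = real a * ln (real p)" unfolding Lambda_star_def using True by simp
  have "prime_factors n = {p}" using pa
    by (simp add: prime_factorization_prime_power)
  hence "VV n = n" unfolding VV_def by simp
  moreover have "ln (real n) = real a * ln (real p)" using pa by (simp add: ln_realpow prime_gt_0_nat)
  ultimately show ?thesis using L by simp
next
  case False
  have "card (prime_factors n) \<noteq> 1"
  proof
    assume "card (prime_factors n) = 1"
    then obtain p where p: "prime_factors n = {p}" by (meson card_1_singletonE)
    have "n = p ^ multiplicity p n" using prod_prime_factors[of n] n p by simp
    moreover have "prime p" using p by (auto simp: in_prime_factors_iff)
    moreover have "multiplicity p n \<ge> 1" using mult_pos[of p n] p by simp
    ultimately show False using False by blast
  qed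
  hence "VV n = 1" unfolding VV_def by simp
  moreover have "Lambda_star n = 0" unfolding Lambda_star_def using False by (simp only: if_False)
  ultimately show ?thesis by simp
qed

theorem mainTheorem17:
  fixes n :: nat
  assumes "n > 1"
  shows "summable (\<lambda>k. unitary_ramanujan n (Suc k) / of_nat (Suc k))
    \<and> Ln (poly (unitary_cyclotomic n) 1) = complex_of_real (Lambda_star n)
    \<and> complex_of_real (Lambda_star n)
        = - (\<Sum>k. unitary_ramanujan n (Suc k) / of_nat (Suc k))"
proof -
  have n: "n > 1" by fact
  have n0: "n > 0" using n by simp
  define S where "S = {j\<in>{1..n}. ugcd j n = 1}"
  have Sc: "S = {j. 1 \<le> j \<and> j < n \<and> (\<forall>q\<in>QQ n. \<not> q dvd j)}" unfolding S_def by (rule S_char[OF n])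
  have finS: "finite S" unfolding S_def by simp
  have jS: "1 \<le> j \<and> j < n" if "j \<in> S" for j using that Sc by auto
  have nz1: "zeta n ^ j \<noteq> 1" if "j \<in> S" for j
  proof
    assume "zeta n ^ j = 1"
    hence "n dvd j" using zeta_pow_eq1[OF n0] by simp
    thus False using jS[OF that] by (auto dest: dvd_imp_le)
  qed
  have nm1: "norm (zeta n ^ j) = 1" for j using norm_zeta_pow[OF n0] .
  have re: "Re (1 - zeta n ^ j) > 0" if "j \<in> S" for j
    using re_lt1[OF nm1 nz1[OF that]] by simp
  have nr: "1 - zeta n ^ j \<notin> \<real>\<^sub>\<le>\<^sub>0" if "j \<in> S" for j
    using re[OF that] by (auto simp: complex_nonpos_Reals_iff)
  have nz0: "1 - zeta n ^ j \<noteq> 0" if "j \<in> S" for j using re[OF that] by auto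
  define L where "L = (\<Sum>j\<in>S. Ln (1 - zeta n ^ j))"
  have sm: "(\<lambda>k. unitary_ramanujan n (Suc k) / of_nat (Suc k)) sums (- L)"
  proof -
    have "(\<lambda>k. \<Sum>j\<in>S. (zeta n ^ j) ^ Suc k / of_nat (Suc k)) sums (\<Sum>j\<in>S. - Ln (1 - zeta n ^ j))"
      by (intro sums_sum log_boundary nm1 nz1)
    moreover have "(\<lambda>k. \<Sum>j\<in>S. (zeta n ^ j) ^ Suc k / of_nat (Suc k)) = (\<lambda>k. unitary_ramanujan n (Suc k) / of_nat (Suc k))"
      unfolding unitary_ramanujan_def S_def[symmetric]
      by (intro ext) (simp only: sum_divide_distrib power_mult)
    ultimately show ?thesis unfolding L_def by (simp add: sum_negf)
  qed
  have P: "poly (unitary_cyclotomic n) 1 = (\<Prod>j\<in>S. (1 - zeta n ^ j))"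
    unfolding unitary_cyclotomic_def S_def by (simp add: poly_prod)
  have expL: "exp L = of_nat (VV n)"
    unfolding L_def using finS nz0 by (simp add: exp_sum P[symmetric] poly_value[OF n])
  have cnjz: "cnj (zeta n ^ j) = zeta n ^ (n - j)" if "j \<in> S" for j
  proof -
    have w0: "zeta n ^ j \<noteq> 0" using nm1[of j] by (metis norm_zero zero_neq_one)
    have a: "zeta n ^ j * cnj (zeta n ^ j) = 1"
      using complex_norm_square[of "zeta n ^ j"] nm1[of j] by simp
    have b: "zeta n ^ j * zeta n ^ (n - j) = 1"
      using jS[OF that] zeta_pow_eq1[OF n0, of n] by (simp add: power_add[symmetric])
    from a b w0 show ?thesis by (metis mult_left_cancel)
  qed
  have cl: "n - j \<in> S" if j: "j \<in> S" for j
  proof -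
      have j1: "1 \<le> j" "j < n" using jS[OF j] by auto
      show "n - j \<in> S" unfolding Sc
      proof (intro CollectI conjI ballI)
        show "1 \<le> n - j" "n - j < n" using j1 by auto
        fix q assume q: "q \<in> QQ n"
        show "\<not> q dvd n - j"
        proof
          assume "q dvd n - j"
          moreover have "q dvd n" using QQ_props(2)[OF n0] q by blast
          ultimately have "q dvd n - (n - j)" by (rule dvd_diff_nat[rotated])
          hence "q dvd j" using j1 by simp
          thus False using j q unfolding Sc by blast
        qed
      qed
  qed
  have inv: "n - (n - j) = j" if j: "j \<in> S" for j using jS[OF j] by auto
  have cL: "cnj L = L"
  proof -
    have "cnj L = (\<Sum>j\<in>S. Ln (1 - zeta n ^ (n - j)))"
      unfolding L_def cnj_sum
    proof (rule sum.cong[OF refl])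
      fix j assume j: "j \<in> S"
      show "cnj (Ln (1 - zeta n ^ j)) = Ln (1 - zeta n ^ (n - j))"
        using cnj_Ln[OF nr[OF j]] cnjz[OF j] by simp
    qed
    also have "\<dots> = L" unfolding L_def
      by (rule sum.reindex_bij_witness[of _ "\<lambda>j. n - j" "\<lambda>j. n - j"]) (use cl inv in auto)
    finally show ?thesis .
  qed
  have Lreal: "L = of_real (Re L)"
    using cL by (simp add: complex_eq_iff)
  have "exp (Re L) = real (VV n)"
  proof -
    have "of_real (exp (Re L)) = exp (of_real (Re L) :: complex)" by (simp add: exp_of_real)
    also have "\<dots> = of_nat (VV n)" using expL Lreal by simp
    finally show ?thesis by (metis of_real_eq_iff of_real_of_nat_eq)
  qed
  hence ReL: "Re L = ln (real (VV n))" by (metis ln_exp)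
  have VVpos: "real (VV n) > 0" using \<open>exp (Re L) = real (VV n)\<close> by (metis exp_gt_zero)
  have Lval: "L = of_real (Lambda_star n)" using Lreal ReL Lambda_value[OF n] by simp
  have lnP: "Ln (poly (unitary_cyclotomic n) 1) = of_real (Lambda_star n)"
  proof -
    have "Ln (poly (unitary_cyclotomic n) 1) = Ln (of_real (real (VV n)))"
      using poly_value[OF n] by simp
    also have "\<dots> = of_real (ln (real (VV n)))" using VVpos by (simp add: Ln_of_real)
    finally show ?thesis using Lambda_value[OF n] by simp
  qed
  have su: "(\<Sum>k. unitary_ramanujan n (Suc k) / of_nat (Suc k)) = - L" using sums_unique[OF sm] by simp
  show ?thesis
    using sums_summable[OF sm] lnP Lval unfolding su by simp
qed

end
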